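(* Let $p\ge3$. Let $\mathfrak{S}=\mathbb{Z}_p[[\lambda]]$ with $\delta$-structure determined by $\varphi(\lambda)=(\lambda+p)^p-p$, and let $\iota\colon\mathfrak{S}\to W(\mathbb{Z}_p)$ be the unique $\delta$-ring map lifting the quotient map $\mathfrak{S}\to\mathfrak{S}/\lambda=\mathbb{Z}_p$. Then there exists a unit $x_\lambda\in W(\mathbb{Z}_p)^\times$ such that $\iota(\lambda)=V(F(x_\lambda))$, where $F$ and $V$ are the Witt vector Frobenius and Verschiebung.
   Context: $W(\mathbb{Z}_p)$ denotes the ring of $p$-typical Witt vectors of $\mathbb{Z}_p$, with its canonical $\delta$-ring structure. *)

theory Defs
  imports "HOL-Computational_Algebra.Primes" "HOL-Algebra.Ring" "HOL-Algebra.RingHom"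
begin

text \<open>The p-adic integers Z_p, realised as compatible sequences of residues:
  x n is the residue of x modulo p^n, taken in {0..<p^n}.\<close>
definition Zp :: "nat \<Rightarrow> (nat \<Rightarrow> int) ring" where
  "Zp p = \<lparr> carrier = {x. \<forall>n. 0 \<le> x n \<and> x n < int p ^ n \<and> x (Suc n) mod int p ^ n = x n},
            mult = (\<lambda>x y n. (x n * y n) mod int p ^ n),
            one = (\<lambda>n. 1 mod int p ^ n),
            zero = (\<lambda>n. 0),
            add = (\<lambda>x y n. (x n + y n) mod int p ^ n) \<rparr>"

text \<open>The power series ring Z_p[[lambda]]: s k is the coefficient of lambda^k.\<close>
definition PS :: "nat \<Rightarrow> (nat \<Rightarrow> nat \<Rightarrow> int) ring" where
  "PS p = \<lparr> carrier = {s. \<forall>k. s k \<in> carrier (Zp p)},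
            mult = (\<lambda>s t k n. (\<Sum>i\<le>k. s i n * t (k - i) n) mod int p ^ n),
            one = (\<lambda>k. if k = 0 then \<one>\<^bsub>Zp p\<^esub> else \<zero>\<^bsub>Zp p\<^esub>),
            zero = (\<lambda>k. \<zero>\<^bsub>Zp p\<^esub>),
            add = (\<lambda>s t k. s k \<oplus>\<^bsub>Zp p\<^esub> t k) \<rparr>"

definition lam :: "nat \<Rightarrow> nat \<Rightarrow> nat \<Rightarrow> int" where
  "lam p = (\<lambda>k. if k = 1 then \<one>\<^bsub>Zp p\<^esub> else \<zero>\<^bsub>Zp p\<^esub>)"

text \<open>p-typical Witt vectors of Z_p: a i is the i-th Witt component.
  Ghost components w_n(a) = sum_{i<=n} p^i a_i^(p^(n-i)).\<close>
definition ghost :: "nat \<Rightarrow> (nat \<Rightarrow> nat \<Rightarrow> int) \<Rightarrow> nat \<Rightarrow> nat \<Rightarrow> int" where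
  "ghost p a n = (\<lambda>m. (\<Sum>i\<le>n. int p ^ i * (a i m) ^ (p ^ (n - i))) mod int p ^ m)"

definition Wcarrier :: "nat \<Rightarrow> (nat \<Rightarrow> nat \<Rightarrow> int) set" where
  "Wcarrier p = {a. \<forall>i. a i \<in> carrier (Zp p)}"

text \<open>Since Z_p is p-torsion free, the ghost map is injective and the ring
  operations of W(Z_p) are characterised by being computed componentwise on ghost
  components (the standard definition of Witt vector addition and multiplication).\<close>
definition W :: "nat \<Rightarrow> (nat \<Rightarrow> nat \<Rightarrow> int) ring" where
  "W p = \<lparr> carrier = Wcarrier p,
           mult = (\<lambda>a b. THE c. c \<in> Wcarrier p \<and>
                     (\<forall>n. ghost p c n = ghost p a n \<otimes>\<^bsub>Zp p\<^esub> ghost p b n)),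
           one = (\<lambda>i. if i = 0 then \<one>\<^bsub>Zp p\<^esub> else \<zero>\<^bsub>Zp p\<^esub>),
           zero = (\<lambda>i. \<zero>\<^bsub>Zp p\<^esub>),
           add = (\<lambda>a b. THE c. c \<in> Wcarrier p \<and>
                     (\<forall>n. ghost p c n = ghost p a n \<oplus>\<^bsub>Zp p\<^esub> ghost p b n)) \<rparr>"

definition WF :: "nat \<Rightarrow> (nat \<Rightarrow> nat \<Rightarrow> int) \<Rightarrow> (nat \<Rightarrow> nat \<Rightarrow> int)" where
  "WF p a = (THE c. c \<in> Wcarrier p \<and> (\<forall>n. ghost p c n = ghost p a (Suc n)))"

definition WV :: "nat \<Rightarrow> (nat \<Rightarrow> nat \<Rightarrow> int) \<Rightarrow> (nat \<Rightarrow> nat \<Rightarrow> int)" where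
  "WV p a = (\<lambda>i. if i = 0 then \<zero>\<^bsub>Zp p\<^esub> else a (i - 1))"

text \<open>Canonical delta-structure on W(Z_p): F(a) = a^p + p * delta(a)
  (W(Z_p) is p-torsion free, so delta is determined by this).\<close>
definition Wdelta :: "nat \<Rightarrow> (nat \<Rightarrow> nat \<Rightarrow> int) \<Rightarrow> (nat \<Rightarrow> nat \<Rightarrow> int)" where
  "Wdelta p a = (THE c. c \<in> Wcarrier p \<and>
      WF p a = a [^]\<^bsub>W p\<^esub> p \<oplus>\<^bsub>W p\<^esub> add_pow (W p) p c)"

definition delta_ring :: "('a, 'b) ring_scheme \<Rightarrow> nat \<Rightarrow> ('a \<Rightarrow> 'a) \<Rightarrow> bool" where
  "delta_ring R p \<delta> \<longleftrightarrow>
     \<delta> \<in> carrier R \<rightarrow> carrier R \<and>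
     \<delta> \<zero>\<^bsub>R\<^esub> = \<zero>\<^bsub>R\<^esub> \<and> \<delta> \<one>\<^bsub>R\<^esub> = \<zero>\<^bsub>R\<^esub> \<and>
     (\<forall>x\<in>carrier R. \<forall>y\<in>carrier R.
        \<delta> (x \<otimes>\<^bsub>R\<^esub> y) = (x [^]\<^bsub>R\<^esub> p \<otimes>\<^bsub>R\<^esub> \<delta> y) \<oplus>\<^bsub>R\<^esub> (y [^]\<^bsub>R\<^esub> p \<otimes>\<^bsub>R\<^esub> \<delta> x)
                      \<oplus>\<^bsub>R\<^esub> add_pow R p (\<delta> x \<otimes>\<^bsub>R\<^esub> \<delta> y)) \<and>
     (\<forall>x\<in>carrier R. \<forall>y\<in>carrier R.
        \<delta> (x \<oplus>\<^bsub>R\<^esub> y) \<oplus>\<^bsub>R\<^esub>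
          (\<Oplus>\<^bsub>R\<^esub>i\<in>{1..<p}. add_pow R ((p choose i) div p) (x [^]\<^bsub>R\<^esub> i \<otimes>\<^bsub>R\<^esub> y [^]\<^bsub>R\<^esub> (p - i)))
        = \<delta> x \<oplus>\<^bsub>R\<^esub> \<delta> y)"

definition delta_ring_hom ::
  "('a, 'c) ring_scheme \<Rightarrow> ('a \<Rightarrow> 'a) \<Rightarrow> ('b, 'd) ring_scheme \<Rightarrow> ('b \<Rightarrow> 'b) \<Rightarrow> ('a \<Rightarrow> 'b) \<Rightarrow> bool" where
  "delta_ring_hom R \<delta>R S \<delta>S h \<longleftrightarrow> h \<in> ring_hom R S \<and> (\<forall>x\<in>carrier R. h (\<delta>R x) = \<delta>S (h x))"

end

theory Submission
  imports Defs "HOL-Number_Theory.Number_Theory"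
begin


lemma fermat_int:
  fixes x :: int assumes p: "prime p"
  shows "[x ^ p = x] (mod int p)"
proof -
  have p0: "p > 0" using p prime_gt_0_nat by blast
  define y where "y = nat (x mod int p)"
  have xy: "[x = int y] (mod int p)" using p0 by (simp add: y_def cong_def)
  have "[y ^ p = y] (mod p)"
  proof (cases "p dvd y")
    case True
    have "y dvd y ^ p" using p0 by (intro dvd_power) simp
    then have "p dvd y ^ p" using True by (rule dvd_trans[rotated])
    then show ?thesis using True by (simp add: cong_def)
  next
    case False
    then have "[y ^ (p - 1) = 1] (mod p)" using fermat_theorem p by blast
    then have "[y ^ (p - 1) * y = 1 * y] (mod p)" by (rule cong_mult) simp
    moreover have "y ^ (p - 1) * y = y ^ Suc (p - 1)" by simp
    moreover have "Suc (p - 1) = p" using p0 by simp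
    ultimately show ?thesis by simp
  qed
  then have "[int (y ^ p) = int y] (mod int p)" using cong_int_iff by blast
  then have "[int y ^ p = int y] (mod int p)" by simp
  moreover have "[x ^ p = int y ^ p] (mod int p)" using xy by (rule cong_pow)
  ultimately show ?thesis using xy by (meson cong_sym cong_trans)
qed


lemma pow_p_cong:
  fixes u v :: int assumes p: "prime p" and j: "j \<ge> 1" and c: "[u = v] (mod int p ^ j)"
  shows "[u ^ p = v ^ p] (mod int p ^ Suc j)"
proof -
  have d1: "int p ^ j dvd u - v" using c by (simp add: cong_iff_dvd_diff)
  have "int p dvd int p ^ j" using j by (intro dvd_power) simp
  then have cp: "[u = v] (mod int p)" using c by (rule cong_dvd_modulus[rotated])
  have "[(\<Sum>i<p. v ^ (p - Suc i) * u ^ i) = (\<Sum>i<p. v ^ (p - Suc i) * v ^ i)] (mod int p)"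
    by (intro cong_sum cong_mult cong_pow cp cong_refl)
  moreover have "v ^ (p - Suc i) * v ^ i = v ^ (p - 1)" if "i < p" for i
  proof -
    have "v ^ (p - Suc i) * v ^ i = v ^ (p - Suc i + i)" by (rule power_add[symmetric])
    moreover have "p - Suc i + i = p - 1" using that by simp
    ultimately show ?thesis by simp
  qed
  then have "(\<Sum>i<p. v ^ (p - Suc i) * v ^ i) = (\<Sum>i<p. v ^ (p - 1))"
    by (intro sum.cong refl) simp
  moreover have "(\<Sum>i<p. v ^ (p - 1)) = int p * v ^ (p - 1)" by simp
  ultimately have "[(\<Sum>i<p. v ^ (p - Suc i) * u ^ i) = int p * v ^ (p - 1)] (mod int p)"
    by simp
  then have d2: "int p dvd (\<Sum>i<p. v ^ (p - Suc i) * u ^ i)"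
    by (simp add: cong_dvd_iff)
  have e: "u ^ p - v ^ p = (u - v) * (\<Sum>i<p. v ^ (p - Suc i) * u ^ i)"
    by (rule power_diff_sumr2)
  have "int p ^ j * int p dvd (u - v) * (\<Sum>i<p. v ^ (p - Suc i) * u ^ i)"
    by (rule mult_dvd_mono[OF d1 d2])
  moreover have "int p ^ j * int p = int p ^ Suc j" by simp
  ultimately have "int p ^ Suc j dvd u ^ p - v ^ p" unfolding e by simp
  then show ?thesis by (simp add: cong_iff_dvd_diff)
qed

lemma fermat_iter:
  fixes x :: int assumes p: "prime p"
  shows "[x ^ (p ^ Suc k) = x ^ (p ^ k)] (mod int p ^ Suc k)"
proof (induction k)
  case 0 then show ?case using fermat_int[OF p] by simp
next
  case (Suc k)
  have "[(x ^ (p ^ Suc k)) ^ p = (x ^ (p ^ k)) ^ p] (mod int p ^ Suc (Suc k))"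
    by (rule pow_p_cong[OF p _ Suc]) simp
  moreover have "(x ^ (p ^ Suc k)) ^ p = x ^ (p ^ Suc (Suc k))"
    by (metis power_Suc2 power_mult)
  moreover have "(x ^ (p ^ k)) ^ p = x ^ (p ^ Suc k)"
    by (metis power_Suc2 power_mult)
  ultimately show ?case by simp
qed



lemma zp_carrier_iff:
  "x \<in> carrier (Zp p) \<longleftrightarrow> (\<forall>n. 0 \<le> x n \<and> x n < int p ^ n \<and> x (Suc n) mod int p ^ n = x n)"
  by (simp add: Zp_def)

lemma zp_mod:
  assumes "x \<in> carrier (Zp p)"
  shows "x m mod int p ^ m = x m"
  using assms by (simp add: zp_carrier_iff)

lemma zp_compat:
  assumes x: "x \<in> carrier (Zp p)" and km: "k \<le> m" and p: "p > 0"
  shows "x m mod int p ^ k = x k"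
  using km
proof (induction m rule: dec_induct)
  case base
  show ?case using zp_mod[OF x, of k] by simp
next
  case (step m)
  have "x (Suc m) mod int p ^ k = (x (Suc m) mod int p ^ m) mod int p ^ k"
    using step(1) by (simp add: mod_mod_cancel le_imp_power_dvd)
  also have "\<dots> = x m mod int p ^ k" using x by (simp add: zp_carrier_iff)
  also have "\<dots> = x k" by (rule step.IH)
  finally show ?case .
qed

lemma zp_cong:
  assumes "x \<in> carrier (Zp p)" "k \<le> m" "p > 0"
  shows "[x m = x k] (mod int p ^ k)"
  using zp_compat[OF assms] zp_mod[OF assms(1), of k] by (simp add: cong_def)

lemma zp_memI:
  assumes "\<And>m. [F (Suc m) = F m] (mod int p ^ m)" "p > 0"
  shows "(\<lambda>m. F m mod int p ^ m) \<in> carrier (Zp p)"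
proof -
  have "F (Suc m) mod int p ^ Suc m mod int p ^ m = F m mod int p ^ m" for m
  proof -
    have "F (Suc m) mod int p ^ Suc m mod int p ^ m = F (Suc m) mod int p ^ m"
      by (simp add: mod_mod_cancel le_imp_power_dvd)
    then show ?thesis using assms(1)[of m] by (simp add: cong_def)
  qed
  then show ?thesis using assms(2) by (simp add: zp_carrier_iff)
qed

lemma zp_eqI:
  assumes "x \<in> carrier (Zp p)" "y \<in> carrier (Zp p)" "\<And>m. [x m = y m] (mod int p ^ m)"
  shows "x = y"
proof
  fix m
  have "x m = x m mod int p ^ m" using zp_mod[OF assms(1)] by simp
  also have "\<dots> = y m mod int p ^ m" using assms(3) by (simp add: cong_def)
  also have "\<dots> = y m" using zp_mod[OF assms(2)] by simp
  finally show "x m = y m" .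
qed

lemma zp_zero [simp]: "\<zero>\<^bsub>Zp p\<^esub> = (\<lambda>n. 0)" by (simp add: Zp_def)
lemma zp_one [simp]: "\<one>\<^bsub>Zp p\<^esub> = (\<lambda>n. 1 mod int p ^ n)" by (simp add: Zp_def)
lemma zp_mult [simp]: "x \<otimes>\<^bsub>Zp p\<^esub> y = (\<lambda>n. (x n * y n) mod int p ^ n)" by (simp add: Zp_def)
lemma zp_add [simp]: "x \<oplus>\<^bsub>Zp p\<^esub> y = (\<lambda>n. (x n + y n) mod int p ^ n)" by (simp add: Zp_def)

lemma zp_zero_mem: "p > 0 \<Longrightarrow> (\<lambda>n. 0) \<in> carrier (Zp p)" by (simp add: zp_carrier_iff)
lemma zp_one_mem: "p > 0 \<Longrightarrow> (\<lambda>n. 1 mod int p ^ n) \<in> carrier (Zp p)"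
  using zp_memI[of "\<lambda>n. 1" p] by simp

lemma zp_add_mem:
  assumes "x \<in> carrier (Zp p)" "y \<in> carrier (Zp p)" "p > 0"
  shows "(\<lambda>n. (x n + y n) mod int p ^ n) \<in> carrier (Zp p)"
  by (rule zp_memI) (use assms in \<open>auto intro!: cong_add zp_cong\<close>)

lemma zp_mult_mem:
  assumes "x \<in> carrier (Zp p)" "y \<in> carrier (Zp p)" "p > 0"
  shows "(\<lambda>n. (x n * y n) mod int p ^ n) \<in> carrier (Zp p)"
  by (rule zp_memI) (use assms in \<open>auto intro!: cong_mult zp_cong\<close>)

definition wint :: "nat \<Rightarrow> (nat \<Rightarrow> nat \<Rightarrow> int) \<Rightarrow> nat \<Rightarrow> nat \<Rightarrow> int" where
  "wint p a n m = (\<Sum>i\<le>n. int p ^ i * (a i m) ^ (p ^ (n - i)))"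

lemma ghost_wint: "ghost p a n m = wint p a n m mod int p ^ m"
  by (simp add: ghost_def wint_def)

lemma Wcarrier_iff: "a \<in> Wcarrier p \<longleftrightarrow> (\<forall>i. a i \<in> carrier (Zp p))"
  by (simp add: Wcarrier_def)

lemma wint_cong:
  assumes "a \<in> Wcarrier p" "k \<le> m" "p > 0"
  shows "[wint p a n m = wint p a n k] (mod int p ^ k)"
  unfolding wint_def
  by (intro cong_sum cong_mult cong_pow cong_refl zp_cong) (use assms in \<open>auto simp: Wcarrier_iff\<close>)

lemma ghost_mem:
  assumes "a \<in> Wcarrier p" "p > 0"
  shows "ghost p a n \<in> carrier (Zp p)"
proof -
  have "ghost p a n = (\<lambda>m. wint p a n m mod int p ^ m)" by (simp add: ghost_wint fun_eq_iff)
  also have "\<dots> \<in> carrier (Zp p)"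
    by (rule zp_memI) (use wint_cong[OF assms(1) _ assms(2)] assms(2) in auto)
  finally show ?thesis .
qed

lemma wsum_step:
  fixes x :: "nat \<Rightarrow> int" assumes p: "prime p"
  shows "[(\<Sum>i\<le>n. int p ^ i * x i ^ (p ^ (Suc n - i))) = (\<Sum>i\<le>n. int p ^ i * x i ^ (p ^ (n - i)))] (mod int p ^ Suc n)"
proof (rule cong_sum)
  fix i assume "i \<in> {..n}"
  then have i: "i \<le> n" by simp
  define k where "k = n - i"
  have "[x i ^ (p ^ Suc k) = x i ^ (p ^ k)] (mod int p ^ Suc k)" by (rule fermat_iter[OF p])
  then have "int p ^ Suc k dvd x i ^ (p ^ Suc k) - x i ^ (p ^ k)" by (simp add: cong_iff_dvd_diff)
  then have d: "int p ^ i * int p ^ Suc k dvd int p ^ i * (x i ^ (p ^ Suc k) - x i ^ (p ^ k))"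
    by (rule mult_dvd_mono[OF dvd_refl])
  have e1: "int p ^ i * int p ^ Suc k = int p ^ Suc n" using i by (simp add: k_def power_add[symmetric])
  have e2: "Suc n - i = Suc k" using i by (simp add: k_def)
  have d2: "int p ^ Suc n dvd int p ^ i * (x i ^ (p ^ Suc k) - x i ^ (p ^ k))"
    using d unfolding e1 .
  have e3: "int p ^ i * x i ^ p ^ (Suc n - i) - int p ^ i * x i ^ p ^ (n - i) = int p ^ i * (x i ^ (p ^ Suc k) - x i ^ (p ^ k))"
    unfolding e2 k_def by (simp add: right_diff_distrib)
  have "int p ^ Suc n dvd int p ^ i * x i ^ p ^ (Suc n - i) - int p ^ i * x i ^ p ^ (n - i)"
    unfolding e3 by (rule d2)
  then show "[int p ^ i * x i ^ p ^ (Suc n - i) = int p ^ i * x i ^ p ^ (n - i)] (mod int p ^ Suc n)"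
    by (simp add: cong_iff_dvd_diff)
qed

lemma wint_step:
  assumes p: "prime p"
  shows "[wint p a (Suc n) m = wint p a n m] (mod int p ^ Suc n)"
proof -
  have "wint p a (Suc n) m = (\<Sum>i\<le>n. int p ^ i * a i m ^ (p ^ (Suc n - i))) + int p ^ Suc n * a (Suc n) m"
    by (simp add: wint_def)
  also have "[\<dots> = (\<Sum>i\<le>n. int p ^ i * a i m ^ (p ^ (n - i))) + 0] (mod int p ^ Suc n)"
    by (intro cong_add wsum_step[OF p]) (simp add: cong_0_iff)
  finally show ?thesis by (simp add: wint_def)
qed

lemma ghost_step:
  assumes p: "prime p"
  shows "ghost p a (Suc n) (Suc n) = ghost p a n (Suc n)"
  using wint_step[OF p, of a n "Suc n"] by (simp add: ghost_wint cong_def)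

lemma cong_cancel_mult:
  fixes a b c m :: int assumes "[c * a = c * b] (mod c * m)" "c \<noteq> 0"
  shows "[a = b] (mod m)"
proof -
  have "c * m dvd c * (a - b)" using assms(1) by (simp add: cong_iff_dvd_diff right_diff_distrib)
  then show ?thesis using assms(2) by (simp add: cong_iff_dvd_diff)
qed

lemma ghost_inj:
  assumes a: "a \<in> Wcarrier p" and b: "b \<in> Wcarrier p" and p: "p > 0"
    and g: "\<And>n. ghost p a n = ghost p b n"
  shows "a = b"
proof -
  have "a n = b n" for n
  proof (induction n rule: less_induct)
    case (less n)
    show ?case
    proof
      fix m
      have an: "a n \<in> carrier (Zp p)" "b n \<in> carrier (Zp p)" using a b by (auto simp: Wcarrier_iff)
      define S where "S = (\<Sum>i<n. int p ^ i * b i (m + n) ^ (p ^ (n - i)))"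
      have sa: "wint p a n (m + n) = S + int p ^ n * a n (m + n)"
      proof -
        have "wint p a n (m + n) = (\<Sum>i<n. int p ^ i * a i (m + n) ^ (p ^ (n - i))) + int p ^ n * a n (m + n)"
          by (simp add: wint_def lessThan_Suc_atMost[symmetric])
        moreover have "(\<Sum>i<n. int p ^ i * a i (m + n) ^ (p ^ (n - i))) = S"
          unfolding S_def using less by (intro sum.cong) auto
        ultimately show ?thesis by simp
      qed
      have sb: "wint p b n (m + n) = S + int p ^ n * b n (m + n)"
        by (simp add: wint_def S_def lessThan_Suc_atMost[symmetric])
      have "ghost p a n (m + n) = ghost p b n (m + n)" using g[of n] by simp
      then have "[wint p a n (m + n) = wint p b n (m + n)] (mod int p ^ (m + n))"
        by (simp add: ghost_wint cong_def)
      then have "[S + int p ^ n * a n (m + n) = S + int p ^ n * b n (m + n)] (mod int p ^ (m + n))"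
        unfolding sa sb .
      then have "[int p ^ n * a n (m + n) = int p ^ n * b n (m + n)] (mod int p ^ (m + n))"
        unfolding cong_add_lcancel .
      moreover have "int p ^ (m + n) = int p ^ n * int p ^ m" by (simp add: power_add)
      ultimately have "[int p ^ n * a n (m + n) = int p ^ n * b n (m + n)] (mod int p ^ n * int p ^ m)"
        by simp
      then have c1: "[a n (m + n) = b n (m + n)] (mod int p ^ m)"
        by (rule cong_cancel_mult) (use p in simp)
      have c2: "[a n (m + n) = a n m] (mod int p ^ m)" using zp_cong[OF an(1), of m "m+n"] p by simp
      have c3: "[b n (m + n) = b n m] (mod int p ^ m)" using zp_cong[OF an(2), of m "m+n"] p by simp
      have "[a n m = b n m] (mod int p ^ m)"
        using cong_trans[OF cong_trans[OF cong_sym[OF c2] c1] c3] .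
      then show "a n m = b n m" using zp_mod[OF an(1), of m] zp_mod[OF an(2), of m] by (simp add: cong_def)
    qed
  qed
  then show ?thesis by auto
qed



lemma zdiv_mem:
  assumes r: "r \<in> carrier (Zp p)" and rk: "r k = 0" and p: "p > 0"
  shows "(\<lambda>m. r (m + k) div int p ^ k) \<in> carrier (Zp p)"
    and "\<And>m. [int p ^ k * (r (m + k) div int p ^ k) = r m] (mod int p ^ m)"
proof -
  have P0: "int p ^ k > 0" using p by simp
  have dv: "int p ^ k dvd r (m + k)" for m
    using zp_compat[OF r, of k "m + k"] rk p by (simp add: dvd_eq_mod_eq_0)
  have eq: "int p ^ k * (r (m + k) div int p ^ k) = r (m + k)" for m
    using dv[of m] by simp
  have rng: "0 \<le> r (m + k) div int p ^ k \<and> r (m + k) div int p ^ k < int p ^ m" for m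
  proof -
    have "0 \<le> r (m + k)" "r (m + k) < int p ^ (m + k)" using r by (auto simp: zp_carrier_iff)
    moreover have "int p ^ (m + k) = int p ^ k * int p ^ m" by (simp add: power_add mult.commute)
    ultimately have "0 \<le> int p ^ k * (r (m + k) div int p ^ k)" "int p ^ k * (r (m + k) div int p ^ k) < int p ^ k * int p ^ m"
      using eq[of m] by simp_all
    then show ?thesis using P0 by (simp add: zero_le_mult_iff mult_less_cancel_left_pos)
  qed
  show cg: "[int p ^ k * (r (m + k) div int p ^ k) = r m] (mod int p ^ m)" for m
    unfolding eq using zp_cong[OF r, of m "m + k"] p by simp
  have compat: "r (Suc m + k) div int p ^ k mod int p ^ m = r (m + k) div int p ^ k" for m
  proof -
    have "[r (Suc m + k) = r (m + k)] (mod int p ^ (m + k))" using zp_cong[OF r, of "m + k" "Suc m + k"] p by simp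
    then have "[int p ^ k * (r (Suc m + k) div int p ^ k) = int p ^ k * (r (m + k) div int p ^ k)] (mod int p ^ (m + k))"
      unfolding eq .
    moreover have "int p ^ (m + k) = int p ^ k * int p ^ m" by (simp add: power_add)
    ultimately have "[int p ^ k * (r (Suc m + k) div int p ^ k) = int p ^ k * (r (m + k) div int p ^ k)] (mod int p ^ k * int p ^ m)"
      by simp
    then have "[r (Suc m + k) div int p ^ k = r (m + k) div int p ^ k] (mod int p ^ m)"
      by (rule cong_cancel_mult) (use P0 in simp)
    then show ?thesis using rng[of m] by (simp add: cong_def)
  qed
  show "(\<lambda>m. r (m + k) div int p ^ k) \<in> carrier (Zp p)"
    using rng compat by (simp add: zp_carrier_iff)
qed

function dw :: "nat \<Rightarrow> (nat \<Rightarrow> nat \<Rightarrow> int) \<Rightarrow> nat \<Rightarrow> nat \<Rightarrow> int" where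
  "dw p G n m = ((G n (m + n) - (\<Sum>i<n. int p ^ i * dw p G i (m + n) ^ (p ^ (n - i)))) mod int p ^ (m + n)) div int p ^ n"
  by pat_completeness auto
termination by (relation "measure (\<lambda>(p, G, n, m). n)") auto

declare dw.simps [simp del]

lemma dwork:
  assumes p: "prime p" and G: "\<And>n. G n \<in> carrier (Zp p)"
    and cond: "\<And>n. G (Suc n) (Suc n) = G n (Suc n)"
  shows "dw p G \<in> Wcarrier p" and "\<And>n. ghost p (dw p G) n = G n"
proof -
  have p0: "p > 0" using p prime_gt_0_nat by blast
  define a where "a = dw p G"
  have main: "a n \<in> carrier (Zp p) \<and> ghost p a n = G n" for n
  proof (induction n rule: less_induct)
    case (less n)
    define S where "S k = (\<Sum>i<n. int p ^ i * a i k ^ (p ^ (n - i)))" for k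
    define R where "R k = G n k - S k" for k
    define r where "r k = R k mod int p ^ k" for k
    have Scong: "[S k' = S k] (mod int p ^ k)" if "k \<le> k'" for k k'
      unfolding S_def using less that p0
      by (intro cong_sum cong_mult cong_pow cong_refl zp_cong) auto
    have Rcong: "[R k' = R k] (mod int p ^ k)" if "k \<le> k'" for k k'
      unfolding R_def by (intro cong_diff Scong zp_cong G that p0)
    have rmem: "r \<in> carrier (Zp p)"
      unfolding r_def[abs_def] by (rule zp_memI[OF Rcong p0]) simp
    have rn: "r n = 0"
    proof (cases n)
      case 0
      then show ?thesis by (simp add: r_def)
    next
      case (Suc n')
      have "G n n = G n' n" using cond[of n'] Suc by simp
      also have "\<dots> = ghost p a n' n" using less[of n'] Suc by simp
      finally have g1: "[G n n = wint p a n' n] (mod int p ^ n)" by (simp add: ghost_wint cong_def)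
      have "S n = (\<Sum>i\<le>n'. int p ^ i * a i n ^ (p ^ (Suc n' - i)))"
        unfolding S_def Suc by (simp add: lessThan_Suc_atMost)
      also have "[\<dots> = wint p a n' n] (mod int p ^ Suc n')"
        unfolding wint_def by (rule wsum_step[OF p])
      finally have "[S n = wint p a n' n] (mod int p ^ n)" using Suc by simp
      then have "[R n = 0] (mod int p ^ n)" unfolding R_def
        using cong_diff[OF g1] by (metis cong_sym diff_self)
      then show ?thesis by (simp add: r_def cong_def)
    qed
    have an: "a n = (\<lambda>m. r (m + n) div int p ^ n)"
      by (simp add: fun_eq_iff a_def r_def R_def S_def dw.simps[of p G n])
    have amem: "a n \<in> carrier (Zp p)" unfolding an by (rule zdiv_mem(1)[OF rmem rn p0])
    have acg: "[int p ^ n * a n m = r m] (mod int p ^ m)" for m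
      unfolding an by (rule zdiv_mem(2)[OF rmem rn p0])
    have "ghost p a n m = G n m" for m
    proof -
      have w: "wint p a n m = S m + int p ^ n * a n m"
        by (simp add: wint_def S_def lessThan_Suc_atMost[symmetric])
      have c1: "[S m + int p ^ n * a n m = S m + r m] (mod int p ^ m)" by (intro cong_add cong_refl acg)
      have c2: "[S m + r m = S m + R m] (mod int p ^ m)" by (simp add: r_def cong_def mod_add_right_eq)
      have c3: "S m + R m = G n m" by (simp add: R_def)
      have "[wint p a n m = G n m] (mod int p ^ m)" using cong_trans[OF c1 c2] unfolding w c3 .
      then show ?thesis using zp_mod[OF G, of n m] by (simp add: ghost_wint cong_def)
    qed
    then show ?case using amem by auto
  qed
  show "dw p G \<in> Wcarrier p" using main by (simp add: a_def Wcarrier_iff)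
  show "ghost p (dw p G) n = G n" for n using main by (simp add: a_def)
qed

lemma W_the:
  assumes p: "prime p" and G: "\<And>n. G n \<in> carrier (Zp p)"
    and cond: "\<And>n. G (Suc n) (Suc n) = G n (Suc n)"
  shows "(THE c. c \<in> Wcarrier p \<and> (\<forall>n. ghost p c n = G n)) \<in> Wcarrier p \<and>
         (\<forall>n. ghost p (THE c. c \<in> Wcarrier p \<and> (\<forall>n. ghost p c n = G n)) n = G n)"
proof -
  have p0: "p > 0" using p prime_gt_0_nat by blast
  have ex: "\<exists>!c. c \<in> Wcarrier p \<and> (\<forall>n. ghost p c n = G n)"
  proof (rule ex1I)
    show "dw p G \<in> Wcarrier p \<and> (\<forall>n. ghost p (dw p G) n = G n)" using dwork[OF p G cond] by auto
  next
    fix c assume c: "c \<in> Wcarrier p \<and> (\<forall>n. ghost p c n = G n)"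
    show "c = dw p G"
    proof (rule ghost_inj[OF _ _ p0])
      show "c \<in> Wcarrier p" using c by simp
      show "dw p G \<in> Wcarrier p" using dwork[OF p G cond] by simp
      show "ghost p c n = ghost p (dw p G) n" for n using c dwork(2)[OF p G cond] by simp
    qed
  qed
  show ?thesis by (rule theI'[OF ex])
qed



context
  fixes p :: nat assumes p: "prime p"
begin

lemma p0: "p > 0" using p prime_gt_0_nat by blast

lemma W_carrier [simp]: "carrier (W p) = Wcarrier p" by (simp add: W_def)

lemma W_add_eq: "a \<oplus>\<^bsub>W p\<^esub> b = (THE c. c \<in> Wcarrier p \<and> (\<forall>n. ghost p c n = ghost p a n \<oplus>\<^bsub>Zp p\<^esub> ghost p b n))"
  by (simp add: W_def)
lemma W_mult_eq: "a \<otimes>\<^bsub>W p\<^esub> b = (THE c. c \<in> Wcarrier p \<and> (\<forall>n. ghost p c n = ghost p a n \<otimes>\<^bsub>Zp p\<^esub> ghost p b n))"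
  by (simp add: W_def)

lemma ghost_step': "a \<in> Wcarrier p \<Longrightarrow> ghost p a (Suc n) (Suc n) = ghost p a n (Suc n)"
  by (rule ghost_step[OF p])

lemma W_add:
  assumes a: "a \<in> Wcarrier p" and b: "b \<in> Wcarrier p"
  shows "a \<oplus>\<^bsub>W p\<^esub> b \<in> Wcarrier p"
    and "ghost p (a \<oplus>\<^bsub>W p\<^esub> b) n m = (ghost p a n m + ghost p b n m) mod int p ^ m"
proof -
  have "(THE c. c \<in> Wcarrier p \<and> (\<forall>n. ghost p c n = ghost p a n \<oplus>\<^bsub>Zp p\<^esub> ghost p b n)) \<in> Wcarrier p \<and>
    (\<forall>n. ghost p (THE c. c \<in> Wcarrier p \<and> (\<forall>n. ghost p c n = ghost p a n \<oplus>\<^bsub>Zp p\<^esub> ghost p b n)) n = ghost p a n \<oplus>\<^bsub>Zp p\<^esub> ghost p b n)"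
    by (rule W_the[OF p]) (use ghost_mem[OF a p0] ghost_mem[OF b p0] ghost_step[OF p] in \<open>auto intro: zp_add_mem[OF _ _ p0]\<close>)
  then show "a \<oplus>\<^bsub>W p\<^esub> b \<in> Wcarrier p"
    and "ghost p (a \<oplus>\<^bsub>W p\<^esub> b) n m = (ghost p a n m + ghost p b n m) mod int p ^ m"
    unfolding W_add_eq by auto
qed

lemma W_mult:
  assumes a: "a \<in> Wcarrier p" and b: "b \<in> Wcarrier p"
  shows "a \<otimes>\<^bsub>W p\<^esub> b \<in> Wcarrier p"
    and "ghost p (a \<otimes>\<^bsub>W p\<^esub> b) n m = (ghost p a n m * ghost p b n m) mod int p ^ m"
proof -
  have "(THE c. c \<in> Wcarrier p \<and> (\<forall>n. ghost p c n = ghost p a n \<otimes>\<^bsub>Zp p\<^esub> ghost p b n)) \<in> Wcarrier p \<and>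
    (\<forall>n. ghost p (THE c. c \<in> Wcarrier p \<and> (\<forall>n. ghost p c n = ghost p a n \<otimes>\<^bsub>Zp p\<^esub> ghost p b n)) n = ghost p a n \<otimes>\<^bsub>Zp p\<^esub> ghost p b n)"
    by (rule W_the[OF p]) (use ghost_mem[OF a p0] ghost_mem[OF b p0] ghost_step[OF p] in \<open>auto intro: zp_mult_mem[OF _ _ p0]\<close>)
  then show "a \<otimes>\<^bsub>W p\<^esub> b \<in> Wcarrier p"
    and "ghost p (a \<otimes>\<^bsub>W p\<^esub> b) n m = (ghost p a n m * ghost p b n m) mod int p ^ m"
    unfolding W_mult_eq by auto
qed

lemma W_one: "\<one>\<^bsub>W p\<^esub> \<in> Wcarrier p" "ghost p \<one>\<^bsub>W p\<^esub> n m = 1 mod int p ^ m"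
proof -
  show "\<one>\<^bsub>W p\<^esub> \<in> Wcarrier p" using zp_one_mem[OF p0] zp_zero_mem[OF p0]
    by (simp add: W_def Wcarrier_iff)
  have "wint p \<one>\<^bsub>W p\<^esub> n m = (1 mod int p ^ m) ^ (p ^ n)"
  proof -
    have "wint p \<one>\<^bsub>W p\<^esub> n m = (\<Sum>i\<le>n. if i = 0 then (1 mod int p ^ m) ^ (p ^ n) else 0)"
      unfolding wint_def using p0 by (intro sum.cong) (auto simp: W_def)
    also have "\<dots> = (1 mod int p ^ m) ^ (p ^ n)" by (simp add: sum.delta)
    finally show ?thesis .
  qed
  then show "ghost p \<one>\<^bsub>W p\<^esub> n m = 1 mod int p ^ m"
    by (simp add: ghost_wint power_mod)
qed

lemma W_zero: "\<zero>\<^bsub>W p\<^esub> \<in> Wcarrier p" "ghost p \<zero>\<^bsub>W p\<^esub> n m = 0"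
proof -
  show "\<zero>\<^bsub>W p\<^esub> \<in> Wcarrier p" using zp_zero_mem[OF p0] by (simp add: W_def Wcarrier_iff)
  have z: "(0::int) ^ (p ^ k) = 0" for k using p0 by simp
  show "ghost p \<zero>\<^bsub>W p\<^esub> n m = 0" by (simp add: ghost_wint wint_def W_def z)
qed

lemma W_pow:
  assumes a: "a \<in> Wcarrier p"
  shows "a [^]\<^bsub>W p\<^esub> (k::nat) \<in> Wcarrier p \<and> [ghost p (a [^]\<^bsub>W p\<^esub> k) n m = ghost p a n m ^ k] (mod int p ^ m)"
proof (induction k)
  case 0
  then show ?case using W_one by (simp add: cong_def)
next
  case (Suc k)
  have "[ghost p (a [^]\<^bsub>W p\<^esub> k) n m * ghost p a n m = ghost p a n m ^ k * ghost p a n m] (mod int p ^ m)"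
    using Suc by (intro cong_mult cong_refl) auto
  then show ?case using Suc W_mult[OF _ a] by (simp add: cong_def mult.commute)
qed

lemma W_addpow:
  assumes a: "a \<in> Wcarrier p"
  shows "add_pow (W p) (k::nat) a \<in> Wcarrier p \<and> [ghost p (add_pow (W p) k a) n m = int k * ghost p a n m] (mod int p ^ m)"
proof (induction k)
  case 0
  then show ?case using W_zero by (simp add: add_pow_def cong_def)
next
  case (Suc k)
  have e: "add_pow (W p) (Suc k) a = add_pow (W p) k a \<oplus>\<^bsub>W p\<^esub> a"
    by (simp add: add_pow_def)
  have "[ghost p (add_pow (W p) k a) n m + ghost p a n m = int k * ghost p a n m + ghost p a n m] (mod int p ^ m)"
    using Suc by (intro cong_add cong_refl) auto
  then show ?case using Suc W_add[OF _ a] unfolding e by (simp add: cong_def algebra_simps)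
qed

lemma WF_ghost:
  assumes a: "a \<in> Wcarrier p"
  shows "WF p a \<in> Wcarrier p" "ghost p (WF p a) n = ghost p a (Suc n)"
proof -
  have c: "ghost p a (Suc (Suc n)) (Suc n) = ghost p a (Suc n) (Suc n)" for n
  proof -
    have "[wint p a (Suc (Suc n)) (Suc n) = wint p a (Suc n) (Suc n)] (mod int p ^ Suc n)"
      using wint_step[OF p, of a "Suc n" "Suc n"] by (rule cong_dvd_modulus) (simp add: le_imp_power_dvd)
    then show ?thesis by (simp add: ghost_wint cong_def)
  qed
  have "(THE c. c \<in> Wcarrier p \<and> (\<forall>n. ghost p c n = ghost p a (Suc n))) \<in> Wcarrier p \<and>
    (\<forall>n. ghost p (THE c. c \<in> Wcarrier p \<and> (\<forall>n. ghost p c n = ghost p a (Suc n))) n = ghost p a (Suc n))"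
    by (rule W_the[OF p]) (use ghost_mem[OF a p0] c in auto)
  then show "WF p a \<in> Wcarrier p" "ghost p (WF p a) n = ghost p a (Suc n)"
    unfolding WF_def by auto
qed

lemma WV_ghost:
  assumes a: "a \<in> Wcarrier p"
  shows "WV p a \<in> Wcarrier p" "ghost p (WV p a) 0 m = 0"
    "ghost p (WV p a) (Suc n) m = (int p * ghost p a n m) mod int p ^ m"
proof -
  show "WV p a \<in> Wcarrier p" using a zp_zero_mem[OF p0] by (auto simp: WV_def Wcarrier_iff)
  show "ghost p (WV p a) 0 m = 0" by (simp add: ghost_wint wint_def WV_def)
  have z: "(0::int) ^ (p ^ k) = 0" for k using p0 by simp
  have "wint p (WV p a) (Suc n) m = int p ^ 0 * (WV p a 0 m) ^ (p ^ Suc n) + (\<Sum>i\<le>n. int p ^ Suc i * (WV p a (Suc i) m) ^ (p ^ (Suc n - Suc i)))"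
    unfolding wint_def by (simp only: sum.atMost_Suc_shift diff_zero)
  also have "\<dots> = (\<Sum>i\<le>n. int p * (int p ^ i * (a i m) ^ (p ^ (n - i))))"
    using p0 by (simp add: WV_def mult.assoc z)
  also have "\<dots> = int p * wint p a n m" by (simp add: wint_def sum_distrib_left)
  finally have "wint p (WV p a) (Suc n) m = int p * wint p a n m" .
  then show "ghost p (WV p a) (Suc n) m = (int p * ghost p a n m) mod int p ^ m"
    by (simp add: ghost_wint mod_mult_right_eq)
qed

end


lemma wint_mod_p:
  assumes p: "prime p"
  shows "[wint p a n k = (a 0 k) ^ (p ^ n)] (mod int p)"
proof (cases n)
  case 0 then show ?thesis by (simp add: wint_def)
next
  case (Suc n')
  have "wint p a n k = a 0 k ^ (p ^ n) + (\<Sum>i\<le>n'. int p ^ Suc i * a (Suc i) k ^ (p ^ (n - Suc i)))"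
    unfolding wint_def Suc sum.atMost_Suc_shift by simp
  moreover have "int p dvd (\<Sum>i\<le>n'. int p ^ Suc i * a (Suc i) k ^ (p ^ (n - Suc i)))"
    by (intro dvd_sum) simp
  ultimately show ?thesis by (simp add: cong_iff_dvd_diff)
qed

context
  fixes p :: nat assumes p: "prime p"
begin

lemma Wdelta_prop:
  assumes a: "a \<in> Wcarrier p"
  shows "Wdelta p a \<in> Wcarrier p"
    "\<And>n m. [ghost p a (Suc n) m = ghost p a n m ^ p + int p * ghost p (Wdelta p a) n m] (mod int p ^ m)"
proof -
  have p0: "p > 0" using p prime_gt_0_nat by blast
  define r where "r n k = (ghost p a (Suc n) k - ghost p a n k ^ p) mod int p ^ k" for n k
  define K where "K n m = r n (m + 1) div int p ^ 1" for n m
  have rmem: "r n \<in> carrier (Zp p)" for n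
    unfolding r_def
  proof (rule zp_memI[OF _ p0])
    fix k
    have "[ghost p a (Suc n) (Suc k) = ghost p a (Suc n) k] (mod int p ^ k)"
      by (rule zp_cong[OF ghost_mem[OF a p0] _ p0]) simp
    moreover have "[ghost p a n (Suc k) = ghost p a n k] (mod int p ^ k)"
      by (rule zp_cong[OF ghost_mem[OF a p0] _ p0]) simp
    ultimately show "[ghost p a (Suc n) (Suc k) - ghost p a n (Suc k) ^ p = ghost p a (Suc n) k - ghost p a n k ^ p] (mod int p ^ k)"
      by (intro cong_diff cong_pow)
  qed
  have r1: "r n 1 = 0" for n
  proof -
    have "[wint p a (Suc n) 1 = (a 0 1) ^ (p ^ Suc n)] (mod int p)" by (rule wint_mod_p[OF p])
    moreover have "[wint p a n 1 ^ p = ((a 0 1) ^ (p ^ n)) ^ p] (mod int p)"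
      by (intro cong_pow wint_mod_p[OF p])
    moreover have "((a 0 1) ^ (p ^ n)) ^ p = (a 0 1) ^ (p ^ Suc n)"
      by (metis power_Suc2 power_mult)
    ultimately have "[wint p a (Suc n) 1 = wint p a n 1 ^ p] (mod int p)"
      using cong_sym cong_trans by metis
    then have "[ghost p a (Suc n) 1 = ghost p a n 1 ^ p] (mod int p)"
      by (simp add: ghost_wint cong_def mod_mod_cancel power_mod)
    then show ?thesis by (simp add: r_def cong_iff_dvd_diff dvd_eq_mod_eq_0)
  qed
  have Kmem: "K n \<in> carrier (Zp p)" for n
    using zdiv_mem(1)[OF rmem r1 p0] by (simp add: K_def[abs_def])
  have Kcg: "[int p * K n m = r n m] (mod int p ^ m)" for n m
    using zdiv_mem(2)[OF rmem r1 p0] by (simp add: K_def)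
  have Kc: "K (Suc n) (Suc n) = K n (Suc n)" for n
  proof -
    have s1: "ghost p a (Suc (Suc n)) (Suc (Suc n)) = ghost p a (Suc n) (Suc (Suc n))"
      by (rule ghost_step[OF p])
    have "[wint p a (Suc n) (Suc (Suc n)) = wint p a n (Suc (Suc n))] (mod int p ^ Suc n)"
      by (rule wint_step[OF p])
    then have "[ghost p a (Suc n) (Suc (Suc n)) = ghost p a n (Suc (Suc n))] (mod int p ^ Suc n)"
      unfolding ghost_wint
    proof -
      assume h: "[wint p a (Suc n) (Suc (Suc n)) = wint p a n (Suc (Suc n))] (mod int p ^ Suc n)"
      have "int p ^ Suc n dvd int p ^ Suc (Suc n)" by (simp add: le_imp_power_dvd)
      then have h1: "[wint p a (Suc n) (Suc (Suc n)) mod int p ^ Suc (Suc n) = wint p a (Suc n) (Suc (Suc n))] (mod int p ^ Suc n)"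
        "[wint p a n (Suc (Suc n)) = wint p a n (Suc (Suc n)) mod int p ^ Suc (Suc n)] (mod int p ^ Suc n)"
        by (simp_all add: cong_def mod_mod_cancel)
      show "[wint p a (Suc n) (Suc (Suc n)) mod int p ^ Suc (Suc n) = wint p a n (Suc (Suc n)) mod int p ^ Suc (Suc n)] (mod int p ^ Suc n)"
        using cong_trans[OF cong_trans[OF h1(1) h] h1(2)] .
    qed
    from pow_p_cong[OF p _ this] have "[ghost p a (Suc n) (Suc (Suc n)) ^ p = ghost p a n (Suc (Suc n)) ^ p] (mod int p ^ Suc (Suc n))"
      by simp
    then have "r (Suc n) (Suc (Suc n)) = r n (Suc (Suc n))"
      unfolding r_def s1 cong_def by (rule mod_diff_cong[OF refl])
    then show ?thesis by (simp add: K_def)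
  qed
  define c where "c = dw p K"
  have cmem: "c \<in> Wcarrier p" and cgh: "\<And>n. ghost p c n = K n"
    using dwork[OF p Kmem Kc] by (auto simp: c_def)
  have key: "[ghost p a (Suc n) m = ghost p a n m ^ p + int p * ghost p c n m] (mod int p ^ m)" for n m
  proof -
    have "[ghost p a n m ^ p + int p * ghost p c n m = ghost p a n m ^ p + r n m] (mod int p ^ m)"
      unfolding cgh by (intro cong_add cong_refl Kcg)
    also have "[ghost p a n m ^ p + r n m = ghost p a (Suc n) m] (mod int p ^ m)"
      by (simp add: r_def cong_def mod_add_right_eq)
    finally show ?thesis by (rule cong_sym)
  qed
  have Pc: "WF p a = a [^]\<^bsub>W p\<^esub> p \<oplus>\<^bsub>W p\<^esub> add_pow (W p) p c"
  proof (rule ghost_inj[OF WF_ghost(1)[OF p a] _ p0])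
    show "a [^]\<^bsub>W p\<^esub> p \<oplus>\<^bsub>W p\<^esub> add_pow (W p) p c \<in> Wcarrier p"
      using W_pow[OF p a] W_addpow[OF p cmem] by (intro W_add[OF p]) auto
    fix n
    show "ghost p (WF p a) n = ghost p (a [^]\<^bsub>W p\<^esub> p \<oplus>\<^bsub>W p\<^esub> add_pow (W p) p c) n"
    proof (rule zp_eqI[OF ghost_mem[OF WF_ghost(1)[OF p a] p0] ghost_mem[OF _ p0]])
      show "a [^]\<^bsub>W p\<^esub> p \<oplus>\<^bsub>W p\<^esub> add_pow (W p) p c \<in> Wcarrier p"
        using W_pow[OF p a] W_addpow[OF p cmem] by (intro W_add[OF p]) auto
      fix m
      have "[ghost p (a [^]\<^bsub>W p\<^esub> p \<oplus>\<^bsub>W p\<^esub> add_pow (W p) p c) n m =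
             ghost p (a [^]\<^bsub>W p\<^esub> p) n m + ghost p (add_pow (W p) p c) n m] (mod int p ^ m)"
        using W_pow[OF p a] W_addpow[OF p cmem] W_add(2)[OF p] by (simp add: cong_def)
      also have "[ghost p (a [^]\<^bsub>W p\<^esub> p) n m + ghost p (add_pow (W p) p c) n m = ghost p a n m ^ p + int p * ghost p c n m] (mod int p ^ m)"
        using W_pow[OF p a] W_addpow[OF p cmem] by (intro cong_add) auto
      also have "[ghost p a n m ^ p + int p * ghost p c n m = ghost p a (Suc n) m] (mod int p ^ m)" using key by (rule cong_sym)
      finally show "[ghost p (WF p a) n m = ghost p (a [^]\<^bsub>W p\<^esub> p \<oplus>\<^bsub>W p\<^esub> add_pow (W p) p c) n m] (mod int p ^ m)"
        using WF_ghost(2)[OF p a] by (simp add: cong_sym)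
    qed
  qed
  have uniq: "c' = c" if c': "c' \<in> Wcarrier p" "WF p a = a [^]\<^bsub>W p\<^esub> p \<oplus>\<^bsub>W p\<^esub> add_pow (W p) p c'" for c'
  proof (rule ghost_inj[OF c'(1) cmem p0])
    fix n
    have gen: "[ghost p (WF p a) n m = ghost p a n m ^ p + int p * ghost p d n m] (mod int p ^ m)"
      if d: "d \<in> Wcarrier p" "WF p a = a [^]\<^bsub>W p\<^esub> p \<oplus>\<^bsub>W p\<^esub> add_pow (W p) p d" for d m
    proof -
      have "[ghost p (WF p a) n m = ghost p (a [^]\<^bsub>W p\<^esub> p) n m + ghost p (add_pow (W p) p d) n m] (mod int p ^ m)"
        using W_pow[OF p a] W_addpow[OF p d(1)] W_add(2)[OF p] d(2) by (simp add: cong_def)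
      also have "[ghost p (a [^]\<^bsub>W p\<^esub> p) n m + ghost p (add_pow (W p) p d) n m = ghost p a n m ^ p + int p * ghost p d n m] (mod int p ^ m)"
        using W_pow[OF p a] W_addpow[OF p d(1)] by (intro cong_add) auto
      finally show ?thesis .
    qed
    have e: "[int p * ghost p c' n m = int p * ghost p c n m] (mod int p ^ m)" for m
      using cong_trans[OF cong_sym[OF gen[OF c']] gen[OF cmem Pc]] unfolding cong_add_lcancel .
    show "ghost p c' n = ghost p c n"
    proof (rule zp_eqI[OF ghost_mem[OF c'(1) p0] ghost_mem[OF cmem p0]])
      fix m
      have "[int p * ghost p c' n (Suc m) = int p * ghost p c n (Suc m)] (mod int p * int p ^ m)"
        using e[of "Suc m"] by simp
      then have "[ghost p c' n (Suc m) = ghost p c n (Suc m)] (mod int p ^ m)"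
        by (rule cong_cancel_mult) (use p0 in simp)
      moreover have "[ghost p c' n (Suc m) = ghost p c' n m] (mod int p ^ m)"
        using zp_cong[OF ghost_mem[OF c'(1) p0], of m "Suc m"] p0 by simp
      moreover have "[ghost p c n (Suc m) = ghost p c n m] (mod int p ^ m)"
        using zp_cong[OF ghost_mem[OF cmem p0], of m "Suc m"] p0 by simp
      ultimately show "[ghost p c' n m = ghost p c n m] (mod int p ^ m)"
        by (meson cong_sym cong_trans)
    qed
  qed
  have "Wdelta p a = c"
    unfolding Wdelta_def using cmem Pc uniq by (intro the_equality) auto
  then show "Wdelta p a \<in> Wcarrier p"
    "\<And>n m. [ghost p a (Suc n) m = ghost p a n m ^ p + int p * ghost p (Wdelta p a) n m] (mod int p ^ m)"
    using cmem key by auto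
qed

end


lemma pow_p_cong2:
  fixes u v :: int assumes p3: "p \<ge> 3" and du: "int p dvd u" and dv: "int p dvd v"
    and c: "int p ^ j dvd u - v"
  shows "int p ^ (j + 2) dvd u ^ p - v ^ p"
proof -
  have "int p ^ 2 dvd v ^ (p - Suc i) * u ^ i" if "i < p" for i
  proof -
    have "int p ^ (p - Suc i) dvd v ^ (p - Suc i)" using dv by (simp add: dvd_power_same)
    moreover have "int p ^ i dvd u ^ i" using du by (simp add: dvd_power_same)
    ultimately have "int p ^ (p - Suc i) * int p ^ i dvd v ^ (p - Suc i) * u ^ i" by (rule mult_dvd_mono)
    moreover have "int p ^ (p - Suc i) * int p ^ i = int p ^ (p - 1)" using that by (simp add: power_add[symmetric])
    moreover have "int p ^ 2 dvd int p ^ (p - 1)" using p3 by (intro le_imp_power_dvd) simp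
    ultimately show ?thesis by (metis dvd_trans)
  qed
  then have d2: "int p ^ 2 dvd (\<Sum>i<p. v ^ (p - Suc i) * u ^ i)" by (intro dvd_sum) simp
  have e: "u ^ p - v ^ p = (u - v) * (\<Sum>i<p. v ^ (p - Suc i) * u ^ i)" by (rule power_diff_sumr2)
  have "int p ^ (j + 2) dvd (u - v) * (\<Sum>i<p. v ^ (p - Suc i) * u ^ i)"
    using mult_dvd_mono[OF c d2] unfolding power_add[symmetric] .
  then show ?thesis unfolding e .
qed

definition gseq :: "nat \<Rightarrow> nat \<Rightarrow> int" where
  "gseq p n = ((\<lambda>x. (x + int p) ^ p - int p) ^^ n) 0"

lemma gseq_0 [simp]: "gseq p 0 = 0" by (simp add: gseq_def)
lemma gseq_Suc: "gseq p (Suc n) = (gseq p n + int p) ^ p - int p" by (simp add: gseq_def)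

lemma gseq_dvd:
  assumes "p > 0" shows "int p dvd gseq p n"
proof (induction n)
  case 0 then show ?case by simp
next
  case (Suc n)
  have d1: "int p dvd gseq p n + int p" using Suc by simp
  have "gseq p n + int p dvd (gseq p n + int p) ^ p" using assms by (intro dvd_power) simp
  then have "int p dvd (gseq p n + int p) ^ p" using d1 by (rule dvd_trans[rotated])
  then have "int p dvd (gseq p n + int p) ^ p - int p" by simp
  then show ?case by (simp only: gseq_Suc)
qed

lemma gseq_diff:
  assumes p3: "p \<ge> 3" shows "int p ^ Suc n dvd gseq p (Suc n) - gseq p n"
proof (induction n)
  case 0
  have "int p dvd int p ^ p - int p" using p3 by (simp add: dvd_power)
  then show ?case by (simp add: gseq_Suc)
next
  case (Suc n)
  have "int p ^ (Suc n + 2) dvd (gseq p (Suc n) + int p) ^ p - (gseq p n + int p) ^ p"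
    using p3 Suc gseq_dvd[of p] by (intro pow_p_cong2) auto
  then have "int p ^ Suc (Suc n) dvd (gseq p (Suc n) + int p) ^ p - (gseq p n + int p) ^ p"
    by (rule dvd_trans[rotated]) (intro le_imp_power_dvd, simp)
  then show ?case by (simp add: gseq_Suc)
qed

lemma gseq_diff2:
  assumes p3: "p \<ge> 3" shows "int p ^ (n + 3) dvd gseq p (Suc (Suc n)) - gseq p (Suc n)"
proof -
  have "int p ^ (Suc n + 2) dvd (gseq p (Suc n) + int p) ^ p - (gseq p n + int p) ^ p"
    using p3 gseq_diff[OF p3, of n] gseq_dvd[of p] by (intro pow_p_cong2) auto
  moreover have "gseq p (Suc (Suc n)) - gseq p (Suc n) = (gseq p (Suc n) + int p) ^ p - (gseq p n + int p) ^ p"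
    using gseq_Suc[of p "Suc n"] gseq_Suc[of p n] by linarith
  moreover have "Suc n + 2 = n + 3" by simp
  ultimately show ?thesis by metis
qed

definition hseq :: "nat \<Rightarrow> nat \<Rightarrow> int" where
  "hseq p n = gseq p (max n 1) div int p"

lemma hseq_cong:
  assumes p3: "p \<ge> 3" shows "[hseq p (Suc n) = hseq p n] (mod int p ^ Suc n)"
proof (cases n)
  case 0 then show ?thesis by (simp add: hseq_def)
next
  case (Suc k)
  have p0: "p > 0" using p3 by simp
  have e: "gseq p j = int p * hseq p j" if "j \<ge> 1" for j
    using that gseq_dvd[OF p0, of j] by (simp add: hseq_def max_def)
  have "int p ^ (k + 3) dvd gseq p (Suc (Suc k)) - gseq p (Suc k)" by (rule gseq_diff2[OF p3])
  moreover have "gseq p (Suc (Suc k)) - gseq p (Suc k) = int p * (hseq p (Suc n) - hseq p n)"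
    using e[of "Suc (Suc k)"] e[of "Suc k"] Suc by (simp add: right_diff_distrib)
  moreover have "int p ^ (k + 3) = int p * int p ^ Suc n"
  proof -
    have "k + 3 = Suc (Suc (Suc k))" by simp
    then show ?thesis using Suc by (simp only: power_Suc)
  qed
  ultimately have "int p * int p ^ Suc n dvd int p * (hseq p (Suc n) - hseq p n)"
    by metis
  then show ?thesis using p0 by (simp add: cong_iff_dvd_diff)
qed

lemma hseq_unit:
  assumes p: "prime p" and p3: "p \<ge> 3" shows "coprime (hseq p n) (int p ^ m)"
proof -
  have p0: "p > 0" using p3 by simp
  have h0: "hseq p 0 = int p ^ (p - 1) - 1"
  proof -
    have "gseq p 1 = int p * (int p ^ (p - 1) - 1)"
      using p0 by (simp add: gseq_Suc right_diff_distrib power_Suc[symmetric])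
    then show ?thesis using p0 by (simp add: hseq_def)
  qed
  have "[hseq p n = hseq p 0] (mod int p)"
  proof (induction n)
    case 0 then show ?case by simp
  next
    case (Suc n)
    have "[hseq p (Suc n) = hseq p n] (mod int p)"
      using hseq_cong[OF p3, of n] by (rule cong_dvd_modulus) simp
    then show ?case using Suc by (rule cong_trans)
  qed
  moreover have "[hseq p 0 = -1] (mod int p)"
    unfolding h0 using p3 by (simp add: cong_iff_dvd_diff dvd_power)
  ultimately have c: "[hseq p n = -1] (mod int p)" by (rule cong_trans)
  have "\<not> int p dvd hseq p n"
  proof
    assume "int p dvd hseq p n"
    then have "int p dvd -1" using c by (simp add: cong_dvd_iff)
    then show False using p3 by simp
  qed
  then have "coprime (int p) (hseq p n)" using p by (intro prime_imp_coprime) auto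
  then show ?thesis by (simp add: ac_simps)
qed

definition invm :: "nat \<Rightarrow> nat \<Rightarrow> int \<Rightarrow> int" where
  "invm p m u = (SOME v. 0 \<le> v \<and> v < int p ^ m \<and> [u * v = 1] (mod int p ^ m))"

lemma invm_prop:
  assumes "coprime u (int p ^ m)" "p > 0"
  shows "0 \<le> invm p m u \<and> invm p m u < int p ^ m \<and> [u * invm p m u = 1] (mod int p ^ m)"
proof -
  obtain v where v: "[u * v = 1] (mod int p ^ m)" using cong_solve_coprime_int[OF assms(1)] by blast
  have "[u * (v mod int p ^ m) = u * v] (mod int p ^ m)" by (intro cong_mult cong_refl) (simp add: cong_def)
  then have "[u * (v mod int p ^ m) = 1] (mod int p ^ m)" using v by (rule cong_trans)
  then have "\<exists>v. 0 \<le> v \<and> v < int p ^ m \<and> [u * v = 1] (mod int p ^ m)"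
    using assms(2) by (intro exI[of _ "v mod int p ^ m"]) simp
  then show ?thesis unfolding invm_def by (rule someI_ex)
qed

lemma inv_unique:
  fixes u u' v v' N :: int
  assumes "coprime u N" "[u * v = 1] (mod N)" "[u' * v' = 1] (mod N)" "[u = u'] (mod N)"
  shows "[v = v'] (mod N)"
proof -
  have "[u * v' = u' * v'] (mod N)" using assms(4) by (intro cong_mult cong_refl)
  then have "[u * v = u * v'] (mod N)" using assms(2,3) by (meson cong_sym cong_trans)
  then show ?thesis using assms(1) cong_mult_lcancel by blast
qed



lemma PS_carrier_iff: "s \<in> carrier (PS p) \<longleftrightarrow> (\<forall>k. s k \<in> carrier (Zp p))"
  by (simp add: PS_def)

lemma PS_add_eq: "s \<oplus>\<^bsub>PS p\<^esub> t = (\<lambda>k n. (s k n + t k n) mod int p ^ n)"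
  by (simp add: PS_def)

lemma PS_add_mem: "s \<in> carrier (PS p) \<Longrightarrow> t \<in> carrier (PS p) \<Longrightarrow> p > 0 \<Longrightarrow> s \<oplus>\<^bsub>PS p\<^esub> t \<in> carrier (PS p)"
  unfolding PS_add_eq PS_carrier_iff by (auto intro: zp_add_mem)

lemma PS_mult_mem:
  assumes "s \<in> carrier (PS p)" "t \<in> carrier (PS p)" "p > 0"
  shows "s \<otimes>\<^bsub>PS p\<^esub> t \<in> carrier (PS p)"
proof -
  have "(\<lambda>n. (\<Sum>i\<le>k. s i n * t (k - i) n) mod int p ^ n) \<in> carrier (Zp p)" for k
    by (rule zp_memI) (use assms in \<open>auto simp: PS_carrier_iff intro!: cong_sum cong_mult zp_cong\<close>)
  then show ?thesis by (simp add: PS_def)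
qed

lemma PS_one_mem: "p > 0 \<Longrightarrow> \<one>\<^bsub>PS p\<^esub> \<in> carrier (PS p)"
  using zp_one_mem zp_zero_mem by (simp add: PS_def)

lemma PS_zero_mem: "p > 0 \<Longrightarrow> \<zero>\<^bsub>PS p\<^esub> \<in> carrier (PS p)"
  using zp_zero_mem by (simp add: PS_def)

lemma PS_zero_add: "\<zero>\<^bsub>PS p\<^esub> \<oplus>\<^bsub>PS p\<^esub> \<zero>\<^bsub>PS p\<^esub> = \<zero>\<^bsub>PS p\<^esub>"
  by (simp add: PS_def)

lemma lam_mem: "p > 0 \<Longrightarrow> lam p \<in> carrier (PS p)"
  using zp_one_mem zp_zero_mem by (simp add: lam_def PS_carrier_iff)

lemma PS_pow_mem: "s \<in> carrier (PS p) \<Longrightarrow> p > 0 \<Longrightarrow> s [^]\<^bsub>PS p\<^esub> (k::nat) \<in> carrier (PS p)"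
  by (induction k) (auto intro: PS_mult_mem PS_one_mem)

lemma PS_addpow_mem: "s \<in> carrier (PS p) \<Longrightarrow> p > 0 \<Longrightarrow> add_pow (PS p) (k::nat) s \<in> carrier (PS p)"
proof (induction k)
  case 0 then show ?case using PS_zero_mem by (simp add: add_pow_def)
next
  case (Suc k)
  have e: "add_pow (PS p) (Suc k) s = add_pow (PS p) k s \<oplus>\<^bsub>PS p\<^esub> s"
    by (simp add: add_pow_def)
  show ?case unfolding e using Suc by (intro PS_add_mem) auto
qed

context
  fixes p :: nat and \<iota> :: "(nat \<Rightarrow> nat \<Rightarrow> int) \<Rightarrow> (nat \<Rightarrow> nat \<Rightarrow> int)"
  assumes p: "prime p" and hom: "\<iota> \<in> ring_hom (PS p) (W p)"
begin

lemma pp0: "p > 0" using p prime_gt_0_nat by blast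

lemma hc: "s \<in> carrier (PS p) \<Longrightarrow> \<iota> s \<in> Wcarrier p"
  using hom p by (auto simp: ring_hom_def)

lemma gh_add:
  assumes "s \<in> carrier (PS p)" "t \<in> carrier (PS p)"
  shows "[ghost p (\<iota> (s \<oplus>\<^bsub>PS p\<^esub> t)) n m = ghost p (\<iota> s) n m + ghost p (\<iota> t) n m] (mod int p ^ m)"
proof -
  have "\<iota> (s \<oplus>\<^bsub>PS p\<^esub> t) = \<iota> s \<oplus>\<^bsub>W p\<^esub> \<iota> t" using hom assms by (simp add: ring_hom_def)
  then show ?thesis using W_add(2)[OF p hc[OF assms(1)] hc[OF assms(2)]] by (simp add: cong_def)
qed

lemma gh_mult:
  assumes "s \<in> carrier (PS p)" "t \<in> carrier (PS p)"
  shows "[ghost p (\<iota> (s \<otimes>\<^bsub>PS p\<^esub> t)) n m = ghost p (\<iota> s) n m * ghost p (\<iota> t) n m] (mod int p ^ m)"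
proof -
  have "\<iota> (s \<otimes>\<^bsub>PS p\<^esub> t) = \<iota> s \<otimes>\<^bsub>W p\<^esub> \<iota> t" using hom assms by (simp add: ring_hom_def)
  then show ?thesis using W_mult(2)[OF p hc[OF assms(1)] hc[OF assms(2)]] by (simp add: cong_def)
qed

lemma gh_one: "[ghost p (\<iota> \<one>\<^bsub>PS p\<^esub>) n m = 1] (mod int p ^ m)"
proof -
  have "\<iota> \<one>\<^bsub>PS p\<^esub> = \<one>\<^bsub>W p\<^esub>" using hom by (simp add: ring_hom_def)
  then show ?thesis using W_one(2)[OF p] by (simp add: cong_def)
qed

lemma gh_zero: "[ghost p (\<iota> \<zero>\<^bsub>PS p\<^esub>) n m = 0] (mod int p ^ m)"
proof -
  have "[ghost p (\<iota> (\<zero>\<^bsub>PS p\<^esub> \<oplus>\<^bsub>PS p\<^esub> \<zero>\<^bsub>PS p\<^esub>)) n m = ghost p (\<iota> \<zero>\<^bsub>PS p\<^esub>) n m + ghost p (\<iota> \<zero>\<^bsub>PS p\<^esub>) n m] (mod int p ^ m)"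
    using PS_zero_mem[OF pp0] by (intro gh_add)
  then have "[ghost p (\<iota> \<zero>\<^bsub>PS p\<^esub>) n m + 0 = ghost p (\<iota> \<zero>\<^bsub>PS p\<^esub>) n m + ghost p (\<iota> \<zero>\<^bsub>PS p\<^esub>) n m] (mod int p ^ m)"
    unfolding PS_zero_add by simp
  then show ?thesis by (metis cong_add_lcancel cong_sym)
qed

lemma gh_pow:
  assumes s: "s \<in> carrier (PS p)"
  shows "[ghost p (\<iota> (s [^]\<^bsub>PS p\<^esub> (k::nat))) n m = ghost p (\<iota> s) n m ^ k] (mod int p ^ m)"
proof (induction k)
  case 0 then show ?case using gh_one by simp
next
  case (Suc k)
  have "[ghost p (\<iota> (s [^]\<^bsub>PS p\<^esub> k \<otimes>\<^bsub>PS p\<^esub> s)) n m = ghost p (\<iota> (s [^]\<^bsub>PS p\<^esub> k)) n m * ghost p (\<iota> s) n m] (mod int p ^ m)"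
    using PS_pow_mem[OF s pp0] s by (intro gh_mult)
  also have "[ghost p (\<iota> (s [^]\<^bsub>PS p\<^esub> k)) n m * ghost p (\<iota> s) n m = ghost p (\<iota> s) n m ^ k * ghost p (\<iota> s) n m] (mod int p ^ m)"
    using Suc by (intro cong_mult cong_refl)
  finally show ?case by (simp add: mult.commute)
qed

lemma gh_addpow:
  assumes s: "s \<in> carrier (PS p)"
  shows "[ghost p (\<iota> (add_pow (PS p) (k::nat) s)) n m = int k * ghost p (\<iota> s) n m] (mod int p ^ m)"
proof (induction k)
  case 0 then show ?case using gh_zero by (simp add: add_pow_def)
next
  case (Suc k)
  have e: "add_pow (PS p) (Suc k) s = add_pow (PS p) k s \<oplus>\<^bsub>PS p\<^esub> s"
    by (simp add: add_pow_def)
  have "[ghost p (\<iota> (add_pow (PS p) k s \<oplus>\<^bsub>PS p\<^esub> s)) n m = ghost p (\<iota> (add_pow (PS p) k s)) n m + ghost p (\<iota> s) n m] (mod int p ^ m)"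
    using PS_addpow_mem[OF s pp0] s by (intro gh_add)
  also have "[ghost p (\<iota> (add_pow (PS p) k s)) n m + ghost p (\<iota> s) n m = int k * ghost p (\<iota> s) n m + ghost p (\<iota> s) n m] (mod int p ^ m)"
    using Suc by (intro cong_add cong_refl)
  finally show ?case unfolding e by (simp add: algebra_simps)
qed

end



theorem lemma6p14:
  fixes p :: nat
    and \<delta> :: "(nat \<Rightarrow> nat \<Rightarrow> int) \<Rightarrow> (nat \<Rightarrow> nat \<Rightarrow> int)"
    and \<iota> :: "(nat \<Rightarrow> nat \<Rightarrow> int) \<Rightarrow> (nat \<Rightarrow> nat \<Rightarrow> int)"
  assumes "prime p" and "p \<ge> 3"
    and "delta_ring (PS p) p \<delta>"
    and "lam p [^]\<^bsub>PS p\<^esub> p \<oplus>\<^bsub>PS p\<^esub> add_pow (PS p) p (\<delta> (lam p)) \<oplus>\<^bsub>PS p\<^esub> add_pow (PS p) p \<one>\<^bsub>PS p\<^esub>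
         = (lam p \<oplus>\<^bsub>PS p\<^esub> add_pow (PS p) p \<one>\<^bsub>PS p\<^esub>) [^]\<^bsub>PS p\<^esub> p"
    and "delta_ring_hom (PS p) \<delta> (W p) (Wdelta p) \<iota>"
    and "\<forall>s\<in>carrier (PS p). \<iota> s 0 = s 0"
  shows "\<exists>x\<in>Units (W p). \<iota> (lam p) = WV p (WF p x)"
proof -
  note p = assms(1) and p3 = assms(2)
  have p0: "p > 0" using p3 by simp
  have hom: "\<iota> \<in> ring_hom (PS p) (W p)" using assms(5) by (simp add: delta_ring_hom_def)
  have lm: "lam p \<in> carrier (PS p)" by (rule lam_mem[OF p0])
  have dm: "\<delta> (lam p) \<in> carrier (PS p)" using assms(3) lm by (auto simp: delta_ring_def)
  have om: "\<one>\<^bsub>PS p\<^esub> \<in> carrier (PS p)" by (rule PS_one_mem[OF p0])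
  have dl: "\<iota> (\<delta> (lam p)) = Wdelta p (\<iota> (lam p))" using assms(5) lm by (simp add: delta_ring_hom_def)
  define a where "a = \<iota> (lam p)"
  have am: "a \<in> Wcarrier p" unfolding a_def by (rule hc[OF p hom lm])
  define A where "A n m = ghost p a n m" for n m
  define P where "P = int p"
  \<comment> \<open>the identity phi(lambda) = (lambda + p)^p - p, on ghost components\<close>
  have eqn: "[A n m ^ p + P * ghost p (Wdelta p a) n m + P = (A n m + P) ^ p] (mod P ^ m)" for n m
  proof -
    note gadd = gh_add[OF p hom] and gpow = gh_pow[OF p hom] and gap = gh_addpow[OF p hom]
    have m1: "lam p [^]\<^bsub>PS p\<^esub> p \<in> carrier (PS p)" by (rule PS_pow_mem[OF lm p0])
    have m2: "add_pow (PS p) p (\<delta> (lam p)) \<in> carrier (PS p)" by (rule PS_addpow_mem[OF dm p0])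
    have m3: "add_pow (PS p) p \<one>\<^bsub>PS p\<^esub> \<in> carrier (PS p)" by (rule PS_addpow_mem[OF om p0])
    have m12: "lam p [^]\<^bsub>PS p\<^esub> p \<oplus>\<^bsub>PS p\<^esub> add_pow (PS p) p (\<delta> (lam p)) \<in> carrier (PS p)"
      by (rule PS_add_mem[OF m1 m2 p0])
    have m4: "lam p \<oplus>\<^bsub>PS p\<^esub> add_pow (PS p) p \<one>\<^bsub>PS p\<^esub> \<in> carrier (PS p)"
      by (rule PS_add_mem[OF lm m3 p0])
    let ?L = "lam p [^]\<^bsub>PS p\<^esub> p \<oplus>\<^bsub>PS p\<^esub> add_pow (PS p) p (\<delta> (lam p)) \<oplus>\<^bsub>PS p\<^esub> add_pow (PS p) p \<one>\<^bsub>PS p\<^esub>"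
    let ?L12 = "lam p [^]\<^bsub>PS p\<^esub> p \<oplus>\<^bsub>PS p\<^esub> add_pow (PS p) p (\<delta> (lam p))"
    let ?R = "(lam p \<oplus>\<^bsub>PS p\<^esub> add_pow (PS p) p \<one>\<^bsub>PS p\<^esub>) [^]\<^bsub>PS p\<^esub> p"
    let ?g = "\<lambda>s. ghost p (\<iota> s) n m"
    let ?D = "ghost p (Wdelta p a) n m"
    have c1: "[?g ?L = ?g ?L12 + ?g (add_pow (PS p) p \<one>\<^bsub>PS p\<^esub>)] (mod int p ^ m)"
      by (rule gadd[OF m12 m3])
    have c2: "[?g ?L12 = ?g (lam p [^]\<^bsub>PS p\<^esub> p) + ?g (add_pow (PS p) p (\<delta> (lam p)))] (mod int p ^ m)"
      by (rule gadd[OF m1 m2])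
    have c3: "[?g (lam p [^]\<^bsub>PS p\<^esub> p) = A n m ^ p] (mod int p ^ m)"
      unfolding A_def a_def by (rule gpow[OF lm])
    have c4: "[?g (add_pow (PS p) p (\<delta> (lam p))) = int p * ?D] (mod int p ^ m)"
      unfolding a_def dl[symmetric] by (rule gap[OF dm])
    have g1: "[?g \<one>\<^bsub>PS p\<^esub> = 1] (mod int p ^ m)" by (rule gh_one[OF p hom])
    have c5: "[?g (add_pow (PS p) p \<one>\<^bsub>PS p\<^esub>) = int p * 1] (mod int p ^ m)"
      using cong_trans[OF gap[OF om] cong_mult[OF cong_refl g1]] .
    have "[?g ?L = (A n m ^ p + int p * ?D) + int p * 1] (mod int p ^ m)"
      using cong_trans[OF c1 cong_add[OF cong_trans[OF c2 cong_add[OF c3 c4]] c5]] .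
    then have L: "[?g ?L = A n m ^ p + P * ?D + P] (mod P ^ m)" by (simp add: P_def)
    have d1: "[?g ?R = ?g (lam p \<oplus>\<^bsub>PS p\<^esub> add_pow (PS p) p \<one>\<^bsub>PS p\<^esub>) ^ p] (mod int p ^ m)"
      by (rule gpow[OF m4])
    have d2: "[?g (lam p \<oplus>\<^bsub>PS p\<^esub> add_pow (PS p) p \<one>\<^bsub>PS p\<^esub>) = ?g (lam p) + ?g (add_pow (PS p) p \<one>\<^bsub>PS p\<^esub>)] (mod int p ^ m)"
      by (rule gadd[OF lm m3])
    have "[?g ?R = (A n m + int p * 1) ^ p] (mod int p ^ m)"
      using cong_trans[OF d1 cong_pow[OF cong_trans[OF d2 cong_add[OF cong_refl c5]]]] unfolding A_def a_def .
    then have R: "[?g ?R = (A n m + P) ^ p] (mod P ^ m)" by (simp add: P_def)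
    have L': "[?g ?R = A n m ^ p + P * ?D + P] (mod P ^ m)" using L unfolding assms(4) .
    show ?thesis using cong_trans[OF cong_sym[OF L'] R] .
  qed
  have wd: "[A (Suc n) m = A n m ^ p + P * ghost p (Wdelta p a) n m] (mod P ^ m)" for n m
    unfolding A_def P_def by (rule Wdelta_prop(2)[OF p am])
  have rec: "[A (Suc n) m = (A n m + P) ^ p - P] (mod P ^ m)" for n m
  proof -
    have "[A (Suc n) m + P = (A n m + P) ^ p] (mod P ^ m)"
      using cong_add[OF wd[of n m] cong_refl[of P]] eqn[of n m] by (rule cong_trans)
    then have "[A (Suc n) m + P - P = (A n m + P) ^ p - P] (mod P ^ m)"
      by (intro cong_diff cong_refl)
    then show ?thesis by simp
  qed
  have a0: "a 0 = (\<lambda>n. 0)" using assms(6) lm by (simp add: a_def lam_def)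
  have A0: "A 0 m = 0" for m by (simp add: A_def ghost_wint wint_def a0)
  have Ag: "[A n m = gseq p n] (mod P ^ m)" for n m
  proof (induction n)
    case 0 then show ?case using A0 by simp
  next
    case (Suc n)
    have "[(A n m + P) ^ p - P = (gseq p n + P) ^ p - P] (mod P ^ m)"
      using Suc by (intro cong_diff cong_pow cong_add cong_refl)
    then show ?case using cong_trans[OF rec[of n m]] by (simp add: gseq_Suc P_def)
  qed
  define G where "G n m = hseq p n mod P ^ m" for n m
  have Gm: "G n \<in> carrier (Zp p)" for n
    unfolding G_def[abs_def] P_def by (rule zp_memI[OF _ p0]) simp
  have Gc: "G (Suc n) (Suc n) = G n (Suc n)" for n
    using hseq_cong[OF p3, of n] by (simp add: G_def P_def cong_def)
  define x where "x = dw p G"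
  have xm: "x \<in> Wcarrier p" and xg: "\<And>n. ghost p x n = G n"
    using dwork[OF p Gm Gc] by (auto simp: x_def)
  have cop: "coprime (hseq p n) (P ^ m)" for n m unfolding P_def by (rule hseq_unit[OF p p3])
  define H where "H n m = invm p m (hseq p n)" for n m
  have Hp: "0 \<le> H n m \<and> H n m < P ^ m \<and> [hseq p n * H n m = 1] (mod P ^ m)" for n m
    unfolding H_def P_def using invm_prop[OF _ p0] cop unfolding P_def by blast
  have Hm: "H n \<in> carrier (Zp p)" for n
  proof -
    have "H n (Suc m) mod P ^ m = H n m" for m
    proof -
      have i1: "[hseq p n * H n (Suc m) = 1] (mod P ^ m)"
        using Hp[of n "Suc m"] cong_dvd_modulus[of "hseq p n * H n (Suc m)" 1 "P ^ Suc m" "P ^ m"]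
        by (simp add: le_imp_power_dvd)
      have "[H n (Suc m) = H n m] (mod P ^ m)"
        using inv_unique[OF cop[of n m] i1 _ cong_refl] Hp[of n m] by blast
      then show ?thesis using Hp[of n m] by (simp add: cong_def)
    qed
    then show ?thesis using Hp by (simp add: zp_carrier_iff P_def)
  qed
  have Hc: "H (Suc n) (Suc n) = H n (Suc n)" for n
  proof -
    have i1: "[hseq p (Suc n) * H (Suc n) (Suc n) = 1] (mod P ^ Suc n)" using Hp by blast
    have i2: "[hseq p n * H n (Suc n) = 1] (mod P ^ Suc n)" using Hp by blast
    have i3: "[hseq p (Suc n) = hseq p n] (mod P ^ Suc n)" using hseq_cong[OF p3, of n] by (simp add: P_def)
    have "[H (Suc n) (Suc n) = H n (Suc n)] (mod P ^ Suc n)"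
      by (rule inv_unique[OF cop i1 i2 i3])
    then show ?thesis using Hp[of "Suc n" "Suc n"] Hp[of n "Suc n"] by (simp add: cong_def)
  qed
  define y where "y = dw p H"
  have ym: "y \<in> Wcarrier p" and yg: "\<And>n. ghost p y n = H n"
    using dwork[OF p Hm Hc] by (auto simp: y_def)
  have prod1: "u \<otimes>\<^bsub>W p\<^esub> v = \<one>\<^bsub>W p\<^esub>" if uv: "(u = x \<and> v = y) \<or> (u = y \<and> v = x)" for u v
  proof -
    have um: "u \<in> Wcarrier p" and vm: "v \<in> Wcarrier p" using uv xm ym by auto
    show ?thesis
    proof (rule ghost_inj[OF W_mult(1)[OF p um vm] W_one(1)[OF p] p0])
      fix n
      show "ghost p (u \<otimes>\<^bsub>W p\<^esub> v) n = ghost p \<one>\<^bsub>W p\<^esub> n"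
      proof
        fix m
        have "ghost p (u \<otimes>\<^bsub>W p\<^esub> v) n m = (G n m * H n m) mod P ^ m"
          using uv W_mult(2)[OF p um vm] xg yg by (auto simp: P_def mult.commute)
        also have "\<dots> = (hseq p n * H n m) mod P ^ m" by (simp add: G_def mod_mult_left_eq)
        also have "\<dots> = 1 mod P ^ m" using Hp[of n m] by (simp add: cong_def)
        finally show "ghost p (u \<otimes>\<^bsub>W p\<^esub> v) n m = ghost p \<one>\<^bsub>W p\<^esub> n m"
          using W_one(2)[OF p] by (simp add: P_def)
      qed
    qed
  qed
  have Wc: "carrier (W p) = Wcarrier p" by (simp add: W_def)
  have xu: "x \<in> Units (W p)" unfolding Units_def Wc using xm ym prod1[of y x] prod1[of x y] by blast
  have Fm: "WF p x \<in> Wcarrier p" by (rule WF_ghost(1)[OF p xm])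
  have "a = WV p (WF p x)"
  proof (rule ghost_inj[OF am WV_ghost(1)[OF p Fm] p0])
    fix n
    show "ghost p a n = ghost p (WV p (WF p x)) n"
    proof (rule zp_eqI[OF ghost_mem[OF am p0] ghost_mem[OF WV_ghost(1)[OF p Fm] p0]])
      fix m
      show "[ghost p a n m = ghost p (WV p (WF p x)) n m] (mod int p ^ m)"
      proof (cases n)
        case 0 then show ?thesis using A0 WV_ghost(2)[OF p Fm] by (simp add: A_def)
      next
        case (Suc k)
        have ge: "gseq p (Suc k) = P * hseq p (Suc k)"
          using gseq_dvd[OF p0, of "Suc k"] by (simp add: hseq_def P_def)
        have "ghost p (WV p (WF p x)) n m = (P * (hseq p (Suc k) mod P ^ m)) mod P ^ m"
          using WV_ghost(3)[OF p Fm] WF_ghost(2)[OF p xm] xg Suc by (simp add: G_def P_def)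
        also have "\<dots> = gseq p n mod P ^ m" using ge Suc by (simp add: mod_mult_right_eq)
        finally show ?thesis using Ag[of n m] by (simp add: A_def P_def cong_def)
      qed
    qed
  qed
  then show ?thesis using xu by (auto simp: a_def)
qed

end
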